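(* Let $\mathbb{F}$ be a field and $0\neq h\in\mathbb{F}[x]$, and let $A=A_h$ be the unital $\mathbb{F}$-algebra generated by $x,\hat y$ with $\hat yx-x\hat y=h$. Then $[\mathbb{F}[x],A]=[x,A]$.
   Context: For subsets $S,T$ of $A$, $[S,T]$ denotes the $\mathbb{F}$-linear span of all commutators $[s,t]=st-ts$ with $s\in S,t\in T$; $[x,A]=\{[x,a]:a\in A\}$. *)

theory Defs
  imports "HOL-Computational_Algebra.Polynomial"
begin

text \<open>The algebra A_h = F<x, y> / (y x - x y = h) is realised concretely as the
Ore extension F[x][y; delta] with delta f = h * f'.  An element is a polynomial in y
with coefficients in F[x], written with coefficients on the left:
  p = sum_j (coeff p j) * y^j.  This is the standard PBW normal form (basis x^i y^j).\<close>

definition ore_delta :: "'a::field poly \<Rightarrow> 'a poly \<Rightarrow> 'a poly" where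
  "ore_delta h f = h * pderiv f"

text \<open>Left multiplication by y:  y * (g_k y^k) = (g_k y + delta g_k) y^k.\<close>
definition ore_Ly :: "'a::field poly \<Rightarrow> 'a poly poly \<Rightarrow> 'a poly poly" where
  "ore_Ly h g = pCons 0 g + map_poly (ore_delta h) g"

definition ore_mult :: "'a::field poly \<Rightarrow> 'a poly poly \<Rightarrow> 'a poly poly \<Rightarrow> 'a poly poly" where
  "ore_mult h p g = (\<Sum>j\<le>degree p. smult (coeff p j) ((ore_Ly h ^^ j) g))"

definition ore_comm :: "'a::field poly \<Rightarrow> 'a poly poly \<Rightarrow> 'a poly poly \<Rightarrow> 'a poly poly" where
  "ore_comm h a b = ore_mult h a b - ore_mult h b a"

definition ore_x :: "'a::field poly poly" where
  "ore_x = [:[:0, 1:]:]"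

definition ore_of_poly :: "'a::field poly \<Rightarrow> 'a poly poly" where
  "ore_of_poly f = [:f:]"

definition F_span :: "'a::field poly poly set \<Rightarrow> 'a poly poly set" where
  "F_span S = {(\<Sum>i<n. smult [:c i:] (s i)) | n (c :: nat \<Rightarrow> 'a) s. \<forall>i<n. s i \<in> S}"

end

theory Submission
  imports Defs
begin

lemma delta_0 [simp]: "ore_delta h 0 = 0"
  by (simp add: ore_delta_def)

lemma coeff_Ly: "coeff (ore_Ly h g) n = (if n = 0 then 0 else coeff g (n-1)) + ore_delta h (coeff g n)"
  by (simp add: ore_Ly_def coeff_pCons coeff_map_poly split: nat.split)

lemma Ly_add: "ore_Ly h (a + b) = ore_Ly h a + ore_Ly h b"
  by (rule poly_eqI) (simp add: coeff_Ly ore_delta_def algebra_simps pderiv_add)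

lemma Ly_0 [simp]: "ore_Ly h 0 = 0"
  by (rule poly_eqI) (simp add: coeff_Ly)

lemma Ly_smult: "ore_Ly h (smult c g) = smult c (ore_Ly h g) + smult (ore_delta h c) g"
  by (rule poly_eqI) (simp add: coeff_Ly ore_delta_def algebra_simps pderiv_mult)

lemma Ly_pCons0: "ore_Ly h (pCons 0 g) = pCons 0 (ore_Ly h g)"
  by (rule poly_eqI) (simp add: coeff_Ly coeff_pCons split: nat.split)

lemma Ly_const_smult: "ore_Ly h (smult [:c:] g) = smult [:c:] (ore_Ly h g)"
  by (simp add: Ly_smult ore_delta_def)

lemma Ly_one: "ore_Ly h 1 = pCons 0 1"
  by (rule poly_eqI) (simp add: coeff_Ly coeff_pCons ore_delta_def coeff_1 split: nat.split)

lemma mult_upto: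
  assumes "degree p \<le> N"
  shows "ore_mult h p g = (\<Sum>j\<le>N. smult (coeff p j) ((ore_Ly h ^^ j) g))"
  unfolding ore_mult_def
  by (rule sum.mono_neutral_left) (use assms in \<open>auto simp: coeff_eq_0\<close>)

lemma mult_pCons: "ore_mult h (pCons c r) g = smult c g + ore_mult h r (ore_Ly h g)"
proof -
  have "ore_mult h (pCons c r) g = (\<Sum>j\<le>Suc (degree r). smult (coeff (pCons c r) j) ((ore_Ly h ^^ j) g))"
    by (rule mult_upto) (rule degree_pCons_le)
  also have "\<dots> = smult c g + (\<Sum>j\<le>degree r. smult (coeff r j) ((ore_Ly h ^^ j) (ore_Ly h g)))"
    by (subst sum.atMost_Suc_shift) (simp add: funpow_Suc_right del: funpow.simps)
  also have "(\<Sum>j\<le>degree r. smult (coeff r j) ((ore_Ly h ^^ j) (ore_Ly h g))) = ore_mult h r (ore_Ly h g)"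
    by (simp add: ore_mult_def)
  finally show ?thesis .
qed

lemma mult_0 [simp]: "ore_mult h 0 g = 0"
  by (simp add: ore_mult_def)

lemma mult_right_0 [simp]: "ore_mult h p 0 = 0"
  by (induct p rule: pCons_induct) (simp_all add: mult_pCons)

lemma mult_const: "ore_mult h [:c:] g = smult c g"
  by (simp add: mult_pCons)

lemma mult_add_right: "ore_mult h p (a + b) = ore_mult h p a + ore_mult h p b"
  by (induct p arbitrary: a b rule: pCons_induct) (simp_all add: mult_pCons Ly_add smult_add_right)

lemma mult_add_left: "ore_mult h (p + q) g = ore_mult h p g + ore_mult h q g"
proof (induct p arbitrary: q g rule: pCons_induct)
  case 0 then show ?case by simp
next
  case (pCons c r)
  show ?case
  proof (cases q)
    case (pCons d s)
    have "ore_mult h (r + s) (ore_Ly h g) = ore_mult h r (ore_Ly h g) + ore_mult h s (ore_Ly h g)"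
      using pCons.hyps(2)[of s "ore_Ly h g"] by (simp add: add.commute)
    then show ?thesis using pCons by (simp add: mult_pCons smult_add_left algebra_simps)
  qed
qed

lemma mult_smult_left: "ore_mult h (smult k p) g = smult k (ore_mult h p g)"
  by (induct p arbitrary: g rule: pCons_induct) (simp_all add: mult_pCons smult_add_right)

lemma mult_smult_const_right: "ore_mult h p (smult [:c:] g) = smult [:c:] (ore_mult h p g)"
  by (induct p arbitrary: g rule: pCons_induct) (simp_all add: mult_pCons Ly_const_smult smult_add_right mult.commute)

lemma mult_pCons0_right: "ore_mult h p (pCons 0 g) = pCons 0 (ore_mult h p g)"
  by (induct p arbitrary: g rule: pCons_induct) (simp_all add: mult_pCons Ly_pCons0)

lemma mult_one_right: "ore_mult h p 1 = p"
proof (induct p rule: pCons_induct)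
  case 0 then show ?case by simp
next
  case (pCons c r)
  then show ?case by (simp add: mult_pCons Ly_one mult_pCons0_right)
qed

lemma mult_diff_right: "ore_mult h p (a - b) = ore_mult h p a - ore_mult h p b"
  by (metis mult_add_right diff_add_cancel eq_diff_eq)

lemma mult_diff_left: "ore_mult h (p - q) g = ore_mult h p g - ore_mult h q g"
  by (metis mult_add_left diff_add_cancel eq_diff_eq)

lemma Ly_mult: "ore_Ly h (ore_mult h q g) = ore_mult h (ore_Ly h q) g"
proof (induct q arbitrary: g rule: pCons_induct)
  case 0 then show ?case by simp
next
  case (pCons c r)
  have e: "ore_Ly h (pCons c r) = pCons (ore_delta h c) ([:c:] + ore_Ly h r)"
    by (rule poly_eqI) (simp add: coeff_Ly coeff_pCons split: nat.split)
  show ?case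
    by (simp add: e mult_pCons Ly_add Ly_smult pCons.hyps(2) mult_add_left mult_const algebra_simps)
qed

lemma mult_assoc: "ore_mult h (ore_mult h p q) g = ore_mult h p (ore_mult h q g)"
  by (induct p arbitrary: q g rule: pCons_induct)
     (simp_all add: mult_pCons mult_add_left mult_smult_left Ly_mult)

lemma mult_const_right: "ore_mult h a [:[:c:]:] = smult [:c:] a"
proof -
  have "ore_mult h a (smult [:c:] 1) = smult [:c:] a"
    by (simp only: mult_smult_const_right mult_one_right)
  then show ?thesis by simp
qed

lemma comm_add_left: "ore_comm h (u + v) a = ore_comm h u a + ore_comm h v a"
  by (simp add: ore_comm_def mult_add_left mult_add_right)

lemma comm_x_add: "ore_comm h ore_x (u + v) = ore_comm h ore_x u + ore_comm h ore_x v"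
  by (simp add: ore_comm_def mult_add_left mult_add_right)

lemma comm_x_smult: "ore_comm h ore_x (smult k u) = smult k (ore_comm h ore_x u)"
  by (simp add: ore_comm_def ore_x_def mult_const mult_smult_left smult_diff_right)

lemma comm_x_0: "ore_comm h ore_x 0 = 0"
  by (simp add: ore_comm_def)

lemma comm_x_sum: "(\<Sum>i<(n::nat). smult (c i) (ore_comm h ore_x (b i))) = ore_comm h ore_x (\<Sum>i<n. smult (c i) (b i))"
  by (induct n) (simp_all add: comm_x_0 comm_x_add comm_x_smult)

lemma key: "\<exists>b. ore_comm h (ore_of_poly f) a = ore_comm h ore_x b"
proof (induct f arbitrary: a rule: pCons_induct)
  case 0
  have "ore_of_poly 0 = (0 :: 'a poly poly)" by (simp add: ore_of_poly_def)
  then show ?case by (intro exI[of _ 0]) (simp add: ore_comm_def)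
next
  case (pCons c g)
  let ?M = "ore_mult h" and ?X = "ore_x :: 'a poly poly" and ?G = "ore_of_poly g"
  obtain b where b: "?M ?G a - ?M a ?G = ?M ?X b - ?M b ?X"
    using pCons.hyps(2)[of a] by (auto simp: ore_comm_def)
  have split: "ore_of_poly (pCons c g) = [:[:c:]:] + ?M ?X ?G"
    by (simp add: ore_of_poly_def ore_x_def mult_const)
  have c0: "ore_comm h [:[:c:]:] a = 0"
    by (simp add: ore_comm_def mult_const mult_const_right)
  have GX: "?M ?G ?X = ?M ?X ?G"
    by (simp add: ore_of_poly_def ore_x_def mult_const mult.commute)
  have "ore_comm h (?M ?X ?G) a = ore_comm h ?X (?M ?X b + ?M a ?G)"
  proof -
    have "ore_comm h (?M ?X ?G) a = ?M ?X (?M ?G a) - ?M (?M a ?X) ?G"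
      by (simp add: ore_comm_def mult_assoc GX)
    moreover have "ore_comm h ?X (?M ?X b + ?M a ?G) =
       ?M ?X (?M ?X b - ?M b ?X) + ?M (?M ?X a - ?M a ?X) ?G"
      by (simp add: ore_comm_def mult_add_left mult_add_right mult_diff_left mult_diff_right mult_assoc GX)
    moreover have "?M ?X (?M ?X b - ?M b ?X) + ?M (?M ?X a - ?M a ?X) ?G = ?M ?X (?M ?G a) - ?M (?M a ?X) ?G"
      by (simp add: b[symmetric] mult_diff_left mult_diff_right mult_assoc)
    ultimately show ?thesis by simp
  qed
  then have "ore_comm h (ore_of_poly (pCons c g)) a = ore_comm h ?X (?M ?X b + ?M a ?G)"
    by (simp add: split comm_add_left c0)
  then show ?case by blast
qed

theorem lemma2p2:
  fixes h :: "'a::field poly"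
  assumes "h \<noteq> 0"
  shows "F_span {ore_comm h (ore_of_poly f) a | f a. True} = {ore_comm h ore_x a | a. True}"
proof
  show "F_span {ore_comm h (ore_of_poly f) a | f a. True} \<subseteq> {ore_comm h ore_x a | a. True}"
  proof
    fix z assume "z \<in> F_span {ore_comm h (ore_of_poly f) a | f a. True}"
    then obtain n c s where z: "z = (\<Sum>i<(n::nat). smult [:c i:] (s i))"
      and s: "\<forall>i<n. s i \<in> {ore_comm h (ore_of_poly f) a | f a. True}"
      by (auto simp: F_span_def)
    have "\<forall>i. \<exists>b. i < n \<longrightarrow> s i = ore_comm h ore_x b"
      using s key by fastforce
    then obtain b where b: "\<And>i. i < n \<Longrightarrow> s i = ore_comm h ore_x (b i)"
      by metis
    have "z = (\<Sum>i<n. smult [:c i:] (ore_comm h ore_x (b i)))"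
      unfolding z by (rule sum.cong) (simp_all add: b)
    also have "\<dots> = ore_comm h ore_x (\<Sum>i<n. smult [:c i:] (b i))"
      by (rule comm_x_sum)
    finally show "z \<in> {ore_comm h ore_x a | a. True}" by blast
  qed
next
  show "{ore_comm h ore_x a | a. True} \<subseteq> F_span {ore_comm h (ore_of_poly f) a | f a. True}"
  proof
    fix z assume "z \<in> {ore_comm h ore_x a | a. True}"
    then obtain a where a: "z = ore_comm h ore_x a" by blast
    have x: "(ore_x :: 'a poly poly) = ore_of_poly [:0, 1:]" by (simp add: ore_x_def ore_of_poly_def)
    have z1: "z = (\<Sum>i<(1::nat). smult [:(\<lambda>_. 1) i:] ((\<lambda>_. z) i))"
      by (simp add: one_pCons[symmetric])
    have zin: "z \<in> {ore_comm h (ore_of_poly f) a | f a. True}"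
    proof -
      have "z = ore_comm h (ore_of_poly [:0, 1:]) a" using a x by simp
      then show ?thesis by (intro CollectI exI conjI TrueI)
    qed
    show "z \<in> F_span {ore_comm h (ore_of_poly f) a | f a. True}"
      unfolding F_span_def
      by (rule CollectI, rule exI[of _ 1], rule exI[of _ "\<lambda>_. 1"], rule exI[of _ "\<lambda>_. z"])
         (use z1 zin in simp)
  qed
qed

end
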